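(* Let $K\subset\mathbb R^n$ be a convex body with $rB_2^n\subset K$ for some $r\in(0,1]$. Let $N=N(K,B_2^n)$ and let $x_1,\dots,x_N\in\mathbb R^n$ satisfy $K\subset\bigcup_{i=1}^N(x_i+B_2^n)$. For $\varepsilon\in(0,1)$ let $A_\varepsilon=\{\theta\in S^{n-1}:|\langle\hat x_i,\theta\rangle|\le\varepsilon$ for all $i$ with $x_i\ne0\}$, where $\hat x=x/|x|$. Then for every $\theta\in A_\varepsilon$ and every outer unit normal $u$ of $K$ at the boundary point $\rho_K(\theta)\theta$, one has \[ \langle u,\theta\rangle\ge r\sqrt{1-\varepsilon^2}. \]
   Context: A convex body is a compact convex set with nonempty interior. $B_2^n$ is the closed Euclidean unit ball, $S^{n-1}$ the unit sphere. The covering number is $N(K,T)=\min\{N:\exists x_1,\dots,x_N\in\mathbb R^n,\ K\subset\bigcup_{i=1}^N(x_i+T)\}$. The radial function is $\rho_K(\theta)=\sup\{t\ge0:t\theta\in K\}$. For $x\in\partial K$, an outer unit normal of $K$ at $x$ is a vector $u\in S^{n-1}$ with $\langle u,x\rangle=h_K(u):=\sup_{y\in K}\langle y,u\rangle$ (the set of these is the normal cone $n_K(x)$). *)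

theory Defs
  imports "HOL-Analysis.Analysis"
begin

definition convex_body :: "'a::euclidean_space set \<Rightarrow> bool" where
  "convex_body K \<longleftrightarrow> convex K \<and> compact K \<and> interior K \<noteq> {}"

definition covering_number :: "'a::euclidean_space set \<Rightarrow> 'a set \<Rightarrow> nat" where
  "covering_number K T = (LEAST N. \<exists>x::nat \<Rightarrow> 'a. K \<subseteq> (\<Union>i<N. (\<lambda>y. x i + y) ` T))"

definition radial_function :: "'a::euclidean_space set \<Rightarrow> 'a \<Rightarrow> real" where
  "radial_function K \<theta> = Sup {t. t \<ge> 0 \<and> t *\<^sub>R \<theta> \<in> K}"

definition support_function :: "'a::euclidean_space set \<Rightarrow> 'a \<Rightarrow> real" where
  "support_function K u = Sup ((\<lambda>y. y \<bullet> u) ` K)"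

definition normal_cone :: "'a::euclidean_space set \<Rightarrow> 'a \<Rightarrow> 'a set" where
  "normal_cone K x = {u. norm u = 1 \<and> x \<bullet> u = support_function K u}"

end

theory Submission
  imports Defs
begin

theorem proposition2p4:
  fixes K :: "'a::euclidean_space set" and r \<epsilon> :: real and N :: nat
    and x :: "nat \<Rightarrow> 'a"
  assumes "convex_body K"
    and "0 < r" "r \<le> 1" "cball 0 r \<subseteq> K"
    and "N = covering_number K (cball 0 1)"
    and "K \<subseteq> (\<Union>i<N. (\<lambda>y. x i + y) ` cball 0 1)"
    and "0 < \<epsilon>" "\<epsilon> < 1"
    and "\<theta> \<in> {\<theta>. norm \<theta> = 1 \<and>
            (\<forall>i<N. x i \<noteq> 0 \<longrightarrow> \<bar>(x i /\<^sub>R norm (x i)) \<bullet> \<theta>\<bar> \<le> \<epsilon>)}"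
    and "u \<in> normal_cone K (radial_function K \<theta> *\<^sub>R \<theta>)"
  shows "u \<bullet> \<theta> \<ge> r * sqrt (1 - \<epsilon>\<^sup>2)"
proof -
  have cK: "compact K" using assms(1) unfolding convex_body_def by auto
  have nt: "norm \<theta> = 1" and th: "\<forall>i<N. x i \<noteq> 0 \<longrightarrow> \<bar>(x i /\<^sub>R norm (x i)) \<bullet> \<theta>\<bar> \<le> \<epsilon>"
    using assms(9) by auto
  have nu: "norm u = 1" and uh: "(radial_function K \<theta> *\<^sub>R \<theta>) \<bullet> u = support_function K u"
    using assms(10) unfolding normal_cone_def by auto
  obtain B where B: "\<forall>y\<in>K. norm y \<le> B"
    using compact_imp_bounded[OF cK] unfolding bounded_iff by auto
  define S where "S = {t. t \<ge> 0 \<and> t *\<^sub>R \<theta> \<in> K}"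
  have rS: "r \<in> S" using assms(2,4) nt unfolding S_def by auto
  have bS: "bdd_above S"
    unfolding bdd_above_def S_def using B nt by (intro exI[of _ B]) auto
  have clS: "closed S"
  proof -
    have "S = {t. 0 \<le> t} \<inter> (\<lambda>t. t *\<^sub>R \<theta>) -` K" unfolding S_def by auto
    moreover have "closed ((\<lambda>t::real. t *\<^sub>R \<theta>) -` K)"
      by (rule continuous_closed_vimage) (auto intro!: continuous_intros compact_imp_closed cK)
    ultimately show ?thesis by (auto intro!: closed_Int closed_Collect_le continuous_intros)
  qed
  define \<rho> where "\<rho> = radial_function K \<theta>"
  have rhoS: "\<rho> \<in> S" unfolding \<rho>_def radial_function_def S_def[symmetric]
    using closed_contains_Sup[OF _ bS clS] rS by auto
  have rho_ge: "\<rho> \<ge> r" unfolding \<rho>_def radial_function_def S_def[symmetric]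
    using cSup_upper[OF rS bS] .
  have pK: "\<rho> *\<^sub>R \<theta> \<in> K" using rhoS unfolding S_def by auto
  have hu: "support_function K u \<ge> r"
  proof -
    have "r *\<^sub>R u \<in> K" using assms(4) nu assms(2) by auto
    moreover have "bdd_above ((\<lambda>y. y \<bullet> u) ` K)"
      unfolding bdd_above_def
    proof (intro exI[of _ B] ballI)
      fix z assume "z \<in> (\<lambda>y. y \<bullet> u) ` K"
      then obtain y where "y \<in> K" "z = y \<bullet> u" by auto
      then show "z \<le> B" using B Cauchy_Schwarz_ineq2[of y u] nu
        by (smt (verit) abs_le_iff mult_cancel_left1)
    qed
    ultimately have "(r *\<^sub>R u) \<bullet> u \<le> support_function K u"
      unfolding support_function_def by (intro cSup_upper) (auto intro: image_eqI[where x="r *\<^sub>R u"] simp del: inner_scaleR_left)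
    moreover have "(r *\<^sub>R u) \<bullet> u = r" using nu by (simp add: dot_square_norm)
    ultimately show ?thesis by linarith
  qed
  have key: "\<rho> * (u \<bullet> \<theta>) \<ge> r" using uh hu unfolding \<rho>_def[symmetric]
    by (simp add: inner_commute)
  have rhobound: "\<rho>\<^sup>2 * (1 - \<epsilon>\<^sup>2) \<le> 1"
  proof -
    obtain i where i: "i < N" "\<rho> *\<^sub>R \<theta> \<in> (\<lambda>y. x i + y) ` cball 0 1"
      using assms(6) pK by auto
    have d: "norm (\<rho> *\<^sub>R \<theta> - x i) \<le> 1" using i(2) by (auto simp: dist_norm norm_minus_commute)
    have e: "\<bar>x i \<bullet> \<theta>\<bar> \<le> \<epsilon> * norm (x i)"
    proof (cases "x i = 0")
      case True then show ?thesis by simp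
    next
      case False
      then have "\<bar>(x i /\<^sub>R norm (x i)) \<bullet> \<theta>\<bar> \<le> \<epsilon>" using th i(1) by auto
      then show ?thesis using False by (simp add: divide_simps)
    qed
    define t where "t = norm (x i)"
    define c where "c = x i \<bullet> \<theta>"
    have "(norm (\<rho> *\<^sub>R \<theta> - x i))\<^sup>2 = \<rho>\<^sup>2 - 2 * \<rho> * c + t\<^sup>2"
    proof -
      have tt: "\<theta> \<bullet> \<theta> = 1" using nt by (simp add: dot_square_norm)
      have "(norm (\<rho> *\<^sub>R \<theta> - x i))\<^sup>2 = (\<rho> *\<^sub>R \<theta> - x i) \<bullet> (\<rho> *\<^sub>R \<theta> - x i)"
        by (simp add: power2_norm_eq_inner)
      also have "\<dots> = \<rho>\<^sup>2 * (\<theta> \<bullet> \<theta>) - 2 * \<rho> * (x i \<bullet> \<theta>) + x i \<bullet> x i"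
        by (simp add: inner_diff_left inner_diff_right inner_commute power2_eq_square algebra_simps)
      finally show ?thesis unfolding c_def t_def tt by (simp add: power2_norm_eq_inner)
    qed
    moreover have "(norm (\<rho> *\<^sub>R \<theta> - x i))\<^sup>2 \<le> 1" using d
      by (simp add: power_le_one)
    ultimately have A: "\<rho>\<^sup>2 - 2 * \<rho> * c + t\<^sup>2 \<le> 1" by simp
    have "\<rho> \<ge> 0" using rho_ge assms(2) by simp
    hence "\<rho> * c \<le> \<rho> * (\<epsilon> * t)" using e unfolding c_def t_def
      by (intro mult_left_mono) auto
    with A have "\<rho>\<^sup>2 - 2 * \<rho> * \<epsilon> * t + t\<^sup>2 \<le> 1" by (simp add: algebra_simps)
    moreover have "\<rho>\<^sup>2 * (1 - \<epsilon>\<^sup>2) \<le> \<rho>\<^sup>2 - 2 * \<rho> * \<epsilon> * t + t\<^sup>2"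
      using sum_squares_ge_zero[of "t - \<rho> * \<epsilon>" 0]
      by (simp add: power2_eq_square algebra_simps)
    ultimately show ?thesis by linarith
  qed
  define s where "s = sqrt (1 - \<epsilon>\<^sup>2)"
  have s0: "s \<ge> 0" unfolding s_def using assms(7,8)
    by (simp add: abs_square_less_1 less_imp_le)
  have "(\<rho> * s)\<^sup>2 \<le> 1" unfolding s_def power_mult_distrib using rhobound assms(7,8)
    by (simp add: abs_square_less_1 less_imp_le)
  hence rs: "\<rho> * s \<le> 1" using s0 rho_ge assms(2)
    by (smt (verit) power2_le_imp_le one_power2 mult_nonneg_nonneg)
  have "\<rho> * (r * s) \<le> \<rho> * (u \<bullet> \<theta>)"
  proof -
    have "\<rho> * (r * s) = r * (\<rho> * s)" by simp
    also have "\<dots> \<le> r" using rs assms(2) by (simp add: mult_left_le)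
    finally show ?thesis using key by linarith
  qed
  then have "r * s \<le> u \<bullet> \<theta>" using rho_ge assms(2)
    by (meson mult_le_cancel_left_pos order_less_le_trans)
  then show ?thesis unfolding s_def .
qed

end
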